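(* Let $\Lambda$ denote the von Mangoldt function and let $\varepsilon>0$ be a small number. Then, as $x\to\infty$, \[ \sum_{n\leq x} \Lambda\left( [x/n]^3+2 \right) = a_3 x + O\left( x^{(2+\varepsilon)/3}\log^2 x \right), \] where the density constant is \[ a_3=\sum_{n\geq 1}\frac{\Lambda(n^3+2)}{n(n+1)}\geq 1.002998. \]
   Context: $[t]$ denotes the largest integer not exceeding $t$. The von Mangoldt function is $\Lambda(m)=\log p$ if $m=p^k$ for a prime $p$ and an integer $k\geq 1$, and $\Lambda(m)=0$ otherwise. The sum is over positive integers $n\le x$. *)

theory Defs
  imports "HOL-Number_Theory.Number_Theory" "HOL-Library.Landau_Symbols"
begin

definition a3 :: real where
  "a3 = (\<Sum>n. mangoldt (Suc n ^ 3 + 2) / (real (Suc n) * real (Suc n + 1)))"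

end

theory Submission
  imports Defs "HOL-Real_Asymp.Real_Asymp"
begin

lemma ln_lower:
  fixes a x :: real
  assumes "0 < x" "1/x \<le> (\<Sum>m<2*k. (-a)^m / fact m)"
  shows "a \<le> ln x"
proof -
  obtain t where t: "exp (-a) = (\<Sum>m<2*k. (-a)^m / fact m) + exp t / fact (2*k) * (-a)^(2*k)"
    using Maclaurin_exp_le[of "-a" "2*k"] by blast
  have "0 \<le> exp t / fact (2*k) * (-a)^(2*k)"
    by (simp add: power_mult)
  hence "1/x \<le> exp (-a)" using t assms(2) by linarith
  hence "1/x \<le> 1 / exp a" by (simp add: exp_minus inverse_eq_divide)
  hence "exp a \<le> x" using assms(1) by (simp add: divide_simps)
  thus ?thesis using assms(1) by (metis exp_le_cancel_iff exp_ln)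
qed

lemma ln2_ge: "6931/10000 \<le> ln (2::real)"
  by (rule ln_lower[where k=6]) (simp_all add: eval_nat_numeral)

lemma ln3_ge: "10986/10000 \<le> ln (3::real)"
  by (rule ln_lower[where k=6]) (simp_all add: eval_nat_numeral)

lemma ln_ge_1m: "0 < (x::real) \<Longrightarrow> 1 - 1/x \<le> ln x"
  using ln_le_minus_one[of "1/x"] by (simp add: ln_div)

lemma ln_decomp: "0 < y \<Longrightarrow> ln ((2::real)^a * 3^b * y) = real a * ln 2 + real b * ln 3 + ln y"
  by (simp add: ln_mult ln_realpow)

fun nodiv :: "nat \<Rightarrow> nat \<Rightarrow> bool" where
  "nodiv n 0 = True"
| "nodiv n (Suc k) = ((Suc k \<le> 1 \<or> n mod Suc k \<noteq> 0) \<and> nodiv n k)"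

lemma nodiv_correct: "nodiv n k \<Longrightarrow> 2 \<le> d \<Longrightarrow> d \<le> k \<Longrightarrow> \<not> d dvd n"
  by (induction n k rule: nodiv.induct) (auto simp: le_Suc_eq)

lemma nodiv_num: "nodiv n (numeral k) = ((numeral k \<le> (1::nat) \<or> n mod numeral k \<noteq> 0) \<and> nodiv n (numeral k - 1))"
  by (metis nodiv.simps(2) Suc_pred' diff_Suc_1 zero_less_numeral)

lemma nodiv_1: "nodiv n 1" by (simp add: One_nat_def)

lemma prime_by_nodiv:
  assumes "nodiv n k" "n < (Suc k)^2" "2 \<le> n"
  shows "prime n"
proof -
  have "\<nexists>p. prime p \<and> p dvd n \<and> p\<^sup>2 \<le> n"
  proof
    assume "\<exists>p. prime p \<and> p dvd n \<and> p\<^sup>2 \<le> n"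
    then obtain p where p: "prime p" "p dvd n" "p\<^sup>2 \<le> n" by blast
    have "p < Suc k"
    proof (rule ccontr)
      assume "\<not> p < Suc k"
      hence "(Suc k)^2 \<le> p^2" by (simp add: power_mono)
      thus False using p(3) assms(2) by linarith
    qed
    moreover have "2 \<le> p" using p(1) prime_ge_2_nat by blast
    ultimately show False using nodiv_correct[OF assms(1)] p(2) by auto
  qed
  thus ?thesis using assms(3) by (subst prime_prime_factor_sqrt) auto
qed

lemma p3: "prime (3::nat)"
  by (rule prime_by_nodiv[where k=2]) (simp_all add: nodiv_num nodiv_1)
lemma p29: "prime (29::nat)"
  by (rule prime_by_nodiv[where k=5]) (simp_all add: nodiv_num nodiv_1)
lemma p127: "prime (127::nat)"
  by (rule prime_by_nodiv[where k=11]) (simp_all add: nodiv_num nodiv_1)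
lemma p24391: "prime (24391::nat)"
  by (rule prime_by_nodiv[where k=156]) (simp_all add: nodiv_num nodiv_1)
lemma p91127: "prime (91127::nat)"
  by (rule prime_by_nodiv[where k=301]) (simp_all add: nodiv_num nodiv_1)

definition ff :: "nat \<Rightarrow> real" where "ff m = mangoldt (m^3+2)"
definition hh :: "real \<Rightarrow> real" where "hh t = (ln t + 2) / t"
definition gg :: "nat \<Rightarrow> real" where
  "gg n = mangoldt (Suc n ^ 3 + 2) / (real (Suc n) * real (Suc n + 1))"

lemma ff_nonneg: "0 \<le> ff m"
  by (simp add: ff_def mangoldt_nonneg)

lemma ff_le: assumes "1 \<le> m" shows "ff m \<le> 3 * (ln (real m) + 1)"
proof -
  have m1: "1 \<le> real m" using assms by simp
  have "ff m \<le> ln (real (m^3+2))" unfolding ff_def by (rule mangoldt_le) simp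
  also have "\<dots> \<le> ln (3 * real m ^ 3)"
  proof -
    have "1 \<le> real m ^ 3" using m1 by simp
    moreover have "0 < 2 + real m ^ 3" by (simp add: add_pos_nonneg)
    ultimately show ?thesis using assms by (subst ln_le_cancel_iff) auto
  qed
  also have "\<dots> = ln 3 + 3 * ln (real m)" using m1 by (simp add: ln_mult ln_realpow)
  also have "\<dots> \<le> 3 * (ln (real m) + 1)"
    using ln_le_minus_one[of 3] by simp
  finally show ?thesis .
qed

lemma tele: assumes "1 \<le> t" shows "(ln t + 1) / (t * (t + 1)) \<le> hh t - hh (t + 1)"
proof -
  have "ln ((t+1)/t) \<le> (t+1)/t - 1" using assms by (intro ln_le_minus_one) simp
  hence "ln (t+1) - ln t \<le> 1 / t" using assms by (simp add: ln_div field_simps)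
  hence k: "t * (ln (t+1) - ln t) \<le> 1" using assms by (simp add: field_simps)
  have eq: "hh t - hh (t+1) = (ln t + 2 - t * (ln (t+1) - ln t)) / (t * (t + 1))"
    using assms by (simp add: hh_def field_simps)
  show ?thesis unfolding eq using assms k by (intro divide_right_mono) auto
qed

lemma gg_eq: "gg n = ff (Suc n) / (real (Suc n) * (real (Suc n) + 1))"
  by (simp add: gg_def ff_def)

lemma gg_nonneg: "0 \<le> gg n"
  unfolding gg_eq using ff_nonneg by simp

lemma gg_le: "gg n \<le> 3 * (hh (real n + 1) - hh (real n + 2))"
proof -
  define t where "t = real (Suc n)"
  have t1: "1 \<le> t" unfolding t_def by simp
  have "gg n = ff (Suc n) / (t * (t + 1))" unfolding gg_eq t_def ..
  also have "\<dots> \<le> 3 * (ln t + 1) / (t * (t + 1))"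
    using ff_le[of "Suc n"] t1 unfolding t_def by (intro divide_right_mono) auto
  also have "\<dots> = 3 * ((ln t + 1) / (t * (t + 1)))" by simp
  also have "\<dots> \<le> 3 * (hh t - hh (t + 1))" by (rule mult_left_mono[OF tele[OF t1]]) simp
  finally have "gg n \<le> 3 * (hh t - hh (t + 1))" .
  moreover have "hh t = hh (real n + 1)" "hh (t + 1) = hh (real n + 2)" unfolding t_def by (simp_all add: add.commute)
  ultimately show ?thesis by metis
qed

lemma hh_lim: "(\<lambda>n. 3 * hh (real (n + M) + 1)) \<longlonglongrightarrow> 0"
  unfolding hh_def by real_asymp

lemma tele_sums: "(\<lambda>k. 3 * (hh (real (k + M) + 1) - hh (real (k + M) + 2))) sums (3 * hh (real M + 1))"
proof -
  have "(\<lambda>k. 3 * hh (real (k + M) + 1) - 3 * hh (real (Suc k + M) + 1)) sums (3 * hh (real (0 + M) + 1) - 0)"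
    by (rule telescope_sums'[OF hh_lim])
  moreover have "\<And>k. real (Suc k + M) + 1 = real (k + M) + 2" by simp
  ultimately show ?thesis by (simp add: algebra_simps)
qed

lemma gg_summable: "summable gg"
proof (rule summable_comparison_test)
  show "\<exists>N. \<forall>n\<ge>N. norm (gg n) \<le> 3 * (hh (real (n + 0) + 1) - hh (real (n + 0) + 2))"
    using gg_le gg_nonneg by auto
  show "summable (\<lambda>n. 3 * (hh (real (n + 0) + 1) - hh (real (n + 0) + 2)))"
    using tele_sums[of 0] by (rule sums_summable)
qed

lemma a3_eq: "a3 = suminf gg"
  by (simp only: a3_def gg_def[abs_def])

lemma tail_bound: "0 \<le> (\<Sum>k. gg (k + M)) \<and> (\<Sum>k. gg (k + M)) \<le> 3 * hh (real M + 1)"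
proof
  have s: "summable (\<lambda>k. gg (k + M))" using gg_summable by (rule summable_ignore_initial_segment)
  show "0 \<le> (\<Sum>k. gg (k + M))" using s gg_nonneg by (intro suminf_nonneg) auto
  have "(\<Sum>k. gg (k + M)) \<le> (\<Sum>k. 3 * (hh (real (k + M) + 1) - hh (real (k + M) + 2)))"
    using s tele_sums[of M] gg_le[of "_ + M"] by (intro suminf_le) (auto simp: sums_summable add_ac)
  also have "\<dots> = 3 * hh (real M + 1)" using tele_sums[of M] by (rule sums_unique[symmetric])
  finally show "(\<Sum>k. gg (k + M)) \<le> 3 * hh (real M + 1)" .
qed

lemma gg_alt: "gg n = mangoldt ((n+1)^3+2) / ((real n + 1) * (real n + 2))"
  by (simp add: gg_def add_ac)
lemma l29: "3 * 10986/10000 + (1 - 27/29) \<le> ln (29::real)"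
proof -
  have "ln (29::real) = real 0 * ln 2 + real 3 * ln 3 + ln (29/27)"
    using ln_decomp[of "29/27" 0 3] by simp
  moreover have "1 - 27/29 \<le> ln (29/27::real)" using ln_ge_1m[of "29/27"] by simp
  ultimately show ?thesis using ln3_ge by simp
qed


lemma m3: "mangoldt (3::nat) = (ln 3::real)" by (subst mangoldt_prime[OF p3]) simp
lemma m29: "mangoldt (29::nat) = (ln 29::real)" by (subst mangoldt_prime[OF p29]) simp
lemma m127: "mangoldt (127::nat) = (ln 127::real)" by (subst mangoldt_prime[OF p127]) simp
lemma m24391: "mangoldt (24391::nat) = (ln 24391::real)" by (subst mangoldt_prime[OF p24391]) simp
lemma m91127: "mangoldt (91127::nat) = (ln 91127::real)" by (subst mangoldt_prime[OF p91127]) simp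

lemma gg0: "gg 0 = ln 3 / 2"
proof -
  show ?thesis using m3[unfolded numeral_3_eq_3] by (simp add: gg_def)
qed
lemma gg2: "gg 2 = ln 29 / 12" by (simp add: gg_alt m29)
lemma gg4: "gg 4 = ln 127 / 30" by (simp add: gg_alt m127)
lemma gg28: "gg 28 = ln 24391 / 870" by (simp add: gg_alt m24391)
lemma gg44: "gg 44 = ln 91127 / 2070" by (simp add: gg_alt m91127)

lemma a3_ge: "1.002998 \<le> a3"
proof -
  have "(\<Sum>n\<in>{0,2,4,28,44}. gg n) \<le> suminf gg"
    using gg_summable gg_nonneg by (intro sum_le_suminf) auto
  moreover have "(\<Sum>n\<in>{0,2,4,28,44}. gg n) = gg 0 + gg 2 + gg 4 + gg 28 + gg 44"
    by simp
  moreover have "ln (29::real) = 3 * ln 3 + ln (29/27)"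
    using ln_decomp[of "29/27" 0 3] by simp
  moreover have "ln (127::real) = 7 * ln 2 + ln (127/128)"
    using ln_decomp[of "127/128" 7 0] by simp
  moreover have "ln (24391::real) = 13 * ln 2 + ln 3 + ln (24391/24576)"
    using ln_decomp[of "24391/24576" 13 1] by simp
  moreover have "ln (91127::real) = 7 * ln 2 + 6 * ln 3 + ln (91127/93312)"
    using ln_decomp[of "91127/93312" 7 6] by simp
  moreover have "1 - 27/29 \<le> ln (29/27::real)" using ln_ge_1m[of "29/27"] by simp
  moreover have "1 - 128/127 \<le> ln (127/128::real)" using ln_ge_1m[of "127/128"] by simp
  moreover have "1 - 24576/24391 \<le> ln (24391/24576::real)" using ln_ge_1m[of "24391/24576"] by simp
  moreover have "1 - 93312/91127 \<le> ln (91127/93312::real)" using ln_ge_1m[of "91127/93312"] by simp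
  moreover have "(1.002998::real) = 1002998/1000000" by simp
  ultimately show ?thesis using ln2_ge ln3_ge gg0 gg2 gg4 gg28 gg44 unfolding a3_eq by linarith
qed


lemma floor_char:
  fixes x :: real assumes "0 \<le> x" "1 \<le> n" "1 \<le> m"
  shows "nat \<lfloor>x / real n\<rfloor> = m \<longleftrightarrow> (n \<le> nat \<lfloor>x / real m\<rfloor> \<and> nat \<lfloor>x / real (Suc m)\<rfloor> < n)"
proof -
  have n0: "0 < real n" and m0: "0 < real m" using assms by auto
  have f0: "0 \<le> \<lfloor>x / real k\<rfloor>" for k using assms(1) by simp
  have "nat \<lfloor>x / real n\<rfloor> = m \<longleftrightarrow> \<lfloor>x / real n\<rfloor> = int m"
    using f0[of n] by auto
  also have "\<dots> \<longleftrightarrow> real m \<le> x / real n \<and> x / real n < real m + 1"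
    by (simp add: floor_eq_iff)
  also have "\<dots> \<longleftrightarrow> real n * real m \<le> x \<and> x < real n * (real m + 1)"
    using n0 by (simp add: pos_le_divide_eq pos_divide_less_eq mult.commute)
  also have "real n * real m \<le> x \<longleftrightarrow> n \<le> nat \<lfloor>x / real m\<rfloor>"
  proof -
    have "n \<le> nat \<lfloor>x / real m\<rfloor> \<longleftrightarrow> int n \<le> \<lfloor>x / real m\<rfloor>" using f0[of m] by linarith
    also have "\<dots> \<longleftrightarrow> real n \<le> x / real m" by (simp add: le_floor_iff)
    also have "\<dots> \<longleftrightarrow> real n * real m \<le> x" using m0 by (simp add: pos_le_divide_eq)
    finally show ?thesis by simp
  qed
  also have "x < real n * (real m + 1) \<longleftrightarrow> nat \<lfloor>x / real (Suc m)\<rfloor> < n"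
  proof -
    have "nat \<lfloor>x / real (Suc m)\<rfloor> < n \<longleftrightarrow> \<lfloor>x / real (Suc m)\<rfloor> < int n" using f0[of "Suc m"] by linarith
    also have "\<dots> \<longleftrightarrow> x / real (Suc m) < real n" by (simp add: floor_less_iff)
    also have "\<dots> \<longleftrightarrow> x < real n * (real m + 1)" by (simp add: pos_divide_less_eq add.commute)
    finally show ?thesis by simp
  qed
  finally show ?thesis .
qed

lemma fiber_eq:
  fixes x :: real assumes "1 \<le> x" "1 \<le> m"
  shows "{n \<in> {1..nat \<lfloor>x\<rfloor>}. nat \<lfloor>x / real n\<rfloor> = m} = {nat \<lfloor>x / real (Suc m)\<rfloor><..nat \<lfloor>x / real m\<rfloor>}"
proof (intro equalityI subsetI)
  fix n assume "n \<in> {n \<in> {1..nat \<lfloor>x\<rfloor>}. nat \<lfloor>x / real n\<rfloor> = m}"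
  hence "1 \<le> n" "nat \<lfloor>x / real n\<rfloor> = m" by auto
  thus "n \<in> {nat \<lfloor>x / real (Suc m)\<rfloor><..nat \<lfloor>x / real m\<rfloor>}"
    using floor_char[of x n m] assms by auto
next
  fix n assume n: "n \<in> {nat \<lfloor>x / real (Suc m)\<rfloor><..nat \<lfloor>x / real m\<rfloor>}"
  hence n1: "1 \<le> n" by auto
  have "x / real m \<le> x" using assms by (simp add: divide_le_eq)
  hence "nat \<lfloor>x / real m\<rfloor> \<le> nat \<lfloor>x\<rfloor>" by (intro nat_mono floor_mono)
  hence "n \<le> nat \<lfloor>x\<rfloor>" using n by auto
  moreover have "nat \<lfloor>x / real n\<rfloor> = m" using floor_char[of x n m] assms n n1 by auto
  ultimately show "n \<in> {n \<in> {1..nat \<lfloor>x\<rfloor>}. nat \<lfloor>x / real n\<rfloor> = m}" using n1 by auto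
qed

lemma fiber_card:
  fixes x :: real assumes "1 \<le> x" "1 \<le> m"
  shows "real (card {n \<in> {1..nat \<lfloor>x\<rfloor>}. nat \<lfloor>x / real n\<rfloor> = m}) =
         of_int \<lfloor>x / real m\<rfloor> - of_int \<lfloor>x / real (Suc m)\<rfloor>"
proof -
  have le: "\<lfloor>x / real (Suc m)\<rfloor> \<le> \<lfloor>x / real m\<rfloor>"
    using assms by (intro floor_mono divide_left_mono) auto
  have z: "0 \<le> \<lfloor>x / real (Suc m)\<rfloor>" using assms by simp
  have z2: "0 \<le> \<lfloor>x / real m\<rfloor>" using assms by simp
  show ?thesis unfolding fiber_eq[OF assms] using le z z2
    by (simp add: of_nat_diff nat_le_eq_zle)
qed

lemma S_identity:
  fixes x :: real assumes "1 \<le> x"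
  shows "(\<Sum>n\<in>{1..nat \<lfloor>x\<rfloor>}. ff (nat \<lfloor>x / real n\<rfloor>)) =
         (\<Sum>m\<in>{1..nat \<lfloor>x\<rfloor>}. ff m * (of_int \<lfloor>x / real m\<rfloor> - of_int \<lfloor>x / real (Suc m)\<rfloor>))"
proof -
  define N where "N = nat \<lfloor>x\<rfloor>"
  have range: "nat \<lfloor>x / real n\<rfloor> \<in> {1..N}" if "n \<in> {1..N}" for n
  proof -
    have n: "1 \<le> n" "n \<le> N" using that by auto
    have "int n \<le> \<lfloor>x\<rfloor>" using n(2) assms unfolding N_def by (simp add: le_nat_iff)
    hence "real n \<le> x" by (metis le_floor_iff of_int_of_nat_eq)
    hence "1 \<le> x / real n" using n by (simp add: le_divide_eq)
    hence "1 \<le> nat \<lfloor>x / real n\<rfloor>" by linarith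
    moreover have "x / real n \<le> x" using n assms by (simp add: divide_le_eq)
    hence "nat \<lfloor>x / real n\<rfloor> \<le> N" unfolding N_def by (intro nat_mono floor_mono)
    ultimately show ?thesis by auto
  qed
  have "(\<Sum>n\<in>{1..N}. ff (nat \<lfloor>x / real n\<rfloor>)) =
        (\<Sum>n\<in>{1..N}. \<Sum>m\<in>{1..N}. if nat \<lfloor>x / real n\<rfloor> = m then ff m else 0)"
    by (intro sum.cong refl) (use range in \<open>auto simp: sum.delta\<close>)
  also have "\<dots> = (\<Sum>m\<in>{1..N}. \<Sum>n\<in>{1..N}. if nat \<lfloor>x / real n\<rfloor> = m then ff m else 0)"
    by (rule sum.swap)
  also have "\<dots> = (\<Sum>m\<in>{1..N}. ff m * real (card {n \<in> {1..N}. nat \<lfloor>x / real n\<rfloor> = m}))"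
    by (intro sum.cong refl) (simp add: sum.If_cases Int_def)
  also have "\<dots> = (\<Sum>m\<in>{1..N}. ff m * (of_int \<lfloor>x / real m\<rfloor> - of_int \<lfloor>x / real (Suc m)\<rfloor>))"
    unfolding N_def by (intro sum.cong refl) (use fiber_card[OF assms] in auto)
  finally show ?thesis unfolding N_def .
qed

lemma gg_partial: "(\<Sum>i<M. gg i) = (\<Sum>m\<in>{1..M}. ff m / (real m * (real m + 1)))"
  by (induction M) (simp_all add: gg_eq)


lemma main_est:
  fixes x :: real assumes x3: "3 \<le> x"
  shows "\<bar>(\<Sum>n\<in>{1..nat \<lfloor>x\<rfloor>}. ff (nat \<lfloor>x / real n\<rfloor>)) - a3 * x\<bar> \<le> 21 * sqrt x * ln x"
proof -
  define N where "N = nat \<lfloor>x\<rfloor>"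
  define M where "M = nat \<lfloor>sqrt x\<rfloor>"
  define A where "A = (\<lambda>m::nat. real_of_int \<lfloor>x / real m\<rfloor>)"
  define L where "L = 3 * (ln x + 1)"
  define s where "s = sqrt x"
  have x0: "0 < x" using x3 by simp
  have ss: "s * s = x" unfolding s_def using x0 by simp
  have s17: "17/10 \<le> s" unfolding s_def using x3 by (intro real_le_rsqrt) (simp add: power2_eq_square)
  have lnx: "1 \<le> ln x"
  proof -
    have "ln 3 \<le> ln x" using x3 by simp
    thus ?thesis using ln3_ge by linarith
  qed
  have L0: "0 \<le> L" unfolding L_def using lnx by simp
  have Meq: "real M = of_int \<lfloor>s\<rfloor>" unfolding M_def s_def by (rule of_nat_nat) (use x0 in simp)
  have Mle: "real M \<le> s" using Meq floor_correct[of s] by simp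
  have Mgt: "s < real M + 1" using Meq floor_correct[of s] by simp
  have "1 \<le> \<lfloor>s\<rfloor>" using s17 by (simp add: le_floor_iff)
  hence "1 \<le> real M" using Meq by simp
  hence M1: "1 \<le> M" by simp
  have sx: "s \<le> x"
  proof -
    have "s * 1 \<le> s * s" using s17 by (intro mult_left_mono) auto
    thus ?thesis using ss by simp
  qed
  have MN: "M \<le> N" unfolding M_def N_def using sx s_def by (intro nat_mono floor_mono) simp
  have M1x: "real M + 1 \<le> x"
  proof -
    have "17/10 * (7/10) \<le> s * (s - 1)" using s17 by (intro mult_mono) auto
    hence "s + 1 \<le> s * s" by (simp add: algebra_simps)
    thus ?thesis using Mle ss by linarith
  qed
  have Aup: "A m \<le> x / real m" for m unfolding A_def by simp
  have Alo: "x / real m - 1 < A m" for m unfolding A_def by linarith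
  have A0: "0 \<le> A m" for m unfolding A_def using x0 by simp
  have Amono: "A (Suc m) \<le> A m" if "1 \<le> m" for m
  proof -
    have "x / real (Suc m) \<le> x / real m" using that x0 by (intro divide_left_mono) auto
    thus ?thesis unfolding A_def by (simp add: floor_mono)
  qed
  have ffL: "ff m \<le> L" if "1 \<le> m" "m \<le> N" for m
  proof -
    have "int m \<le> \<lfloor>x\<rfloor>" using that(2) x3 unfolding N_def by (simp add: le_nat_iff)
    hence "real m \<le> x" by (metis le_floor_iff of_int_of_nat_eq)
    hence "ln (real m) \<le> ln x" using that by simp
    thus ?thesis using ff_le[OF that(1)] unfolding L_def by (smt (verit))
  qed

  have S_eq: "(\<Sum>n\<in>{1..N}. ff (nat \<lfloor>x / real n\<rfloor>)) = (\<Sum>m\<in>{1..N}. ff m * (A m - A (Suc m)))"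
    unfolding N_def A_def using S_identity[of x] x3 by simp
  have split: "{1..N} = {1..M} \<union> {Suc M..N}" using M1 MN by auto
  define R where "R = (\<Sum>m\<in>{1..M}. ff m * ((A m - A (Suc m)) - x / (real m * (real m + 1))))"
  define Q where "Q = (\<Sum>m\<in>{Suc M..N}. ff m * (A m - A (Suc m)))"
  define T where "T = (\<Sum>k. gg (k + M))"
  have S_split: "(\<Sum>m\<in>{1..N}. ff m * (A m - A (Suc m))) =
      (\<Sum>m\<in>{1..M}. ff m * (A m - A (Suc m))) + Q"
    unfolding Q_def split by (rule sum.union_disjoint) auto
  have a3_split: "a3 = (\<Sum>m\<in>{1..M}. ff m / (real m * (real m + 1))) + T"
    unfolding a3_eq T_def gg_partial[symmetric]
    using suminf_split_initial_segment[OF gg_summable, of M] by simp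
  have R_eq: "(\<Sum>m\<in>{1..M}. ff m * (A m - A (Suc m))) - x * (\<Sum>m\<in>{1..M}. ff m / (real m * (real m + 1))) = R"
    unfolding R_def by (simp add: sum_distrib_left sum_subtractf sum.distrib algebra_simps)
  have main: "(\<Sum>n\<in>{1..N}. ff (nat \<lfloor>x / real n\<rfloor>)) - a3 * x = R + Q - x * T"
  proof -
    define P where "P = (\<Sum>m\<in>{1..M}. ff m / (real m * (real m + 1)))"
    have aP: "a3 = P + T" unfolding P_def using a3_split by simp
    have "a3 * x = x * P + x * T" unfolding aP by (simp add: algebra_simps)
    thus ?thesis using S_eq S_split R_eq unfolding P_def[symmetric] by linarith
  qed

  have R_bd: "\<bar>R\<bar> \<le> real M * L"
  proof -
    have "\<bar>R\<bar> \<le> (\<Sum>m\<in>{1..M}. \<bar>ff m * ((A m - A (Suc m)) - x / (real m * (real m + 1)))\<bar>)"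
      unfolding R_def by (rule sum_abs)
    also have "\<dots> \<le> (\<Sum>m\<in>{1..M}. L)"
    proof (rule sum_mono)
      fix m assume m: "m \<in> {1..M}"
      hence m1: "1 \<le> m" and mN: "m \<le> N" using MN by auto
      have e: "x / (real m * (real m + 1)) = x / real m - x / real (Suc m)"
        using m1 by (simp add: field_simps)
      have d: "\<bar>(A m - A (Suc m)) - x / (real m * (real m + 1))\<bar> \<le> 1"
        unfolding e using Aup[of m] Alo[of m] Aup[of "Suc m"] Alo[of "Suc m"] by linarith
      have "\<bar>ff m * ((A m - A (Suc m)) - x / (real m * (real m + 1)))\<bar>
          = ff m * \<bar>(A m - A (Suc m)) - x / (real m * (real m + 1))\<bar>"
        using ff_nonneg[of m] by (simp add: abs_mult)
      also have "\<dots> \<le> ff m * 1" by (rule mult_left_mono[OF d ff_nonneg])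
      finally have "\<bar>ff m * ((A m - A (Suc m)) - x / (real m * (real m + 1)))\<bar> \<le> ff m * 1" .
      thus "\<bar>ff m * ((A m - A (Suc m)) - x / (real m * (real m + 1)))\<bar> \<le> L"
        using ffL[OF m1 mN] by linarith
    qed
    also have "\<dots> = real M * L" by simp
    finally show ?thesis .
  qed

  have Q_bd: "0 \<le> Q \<and> Q \<le> L * s"
  proof
    show "0 \<le> Q" unfolding Q_def
      using Amono ff_nonneg M1 by (intro sum_nonneg mult_nonneg_nonneg) auto
    have "Q \<le> (\<Sum>m\<in>{Suc M..N}. L * (A m - A (Suc m)))"
      unfolding Q_def
    proof (rule sum_mono)
      fix m assume m: "m \<in> {Suc M..N}"
      hence m1: "1 \<le> m" and mN: "m \<le> N" using M1 by auto
      show "ff m * (A m - A (Suc m)) \<le> L * (A m - A (Suc m))"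
        using ffL[OF m1 mN] Amono[OF m1] by (intro mult_right_mono) auto
    qed
    also have "\<dots> = L * (A (Suc M) - A (Suc N))"
    proof -
      have "(\<Sum>m\<in>{Suc M..N}. A (Suc m) - A m) = A (Suc N) - A (Suc M)"
        using MN by (intro sum_Suc_diff) auto
      thus ?thesis by (simp add: sum_distrib_left[symmetric] sum_subtractf)
    qed
    also have "\<dots> \<le> L * (x / real (Suc M))"
      using Aup[of "Suc M"] A0[of "Suc N"] L0 by (intro mult_left_mono) auto
    also have "x / real (Suc M) \<le> s"
    proof -
      have "x \<le> s * real (Suc M)" using ss Mgt s17
        by (metis less_eq_real_def mult_left_mono of_nat_Suc add.commute order_trans zero_le_numeral divide_nonneg_nonneg) 
      thus ?thesis by (simp add: divide_le_eq)
    qed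
    hence "L * (x / real (Suc M)) \<le> L * s" using L0 by (intro mult_left_mono) auto
    finally show "Q \<le> L * s" by simp
  qed

  have T_bd: "0 \<le> x * T \<and> x * T \<le> 3 * s * (ln x + 2)"
  proof
    show "0 \<le> x * T" using tail_bound[of M] x0 unfolding T_def by simp
    have "x * T \<le> x * (3 * hh (real M + 1))"
      using tail_bound[of M] x0 unfolding T_def by (intro mult_left_mono) auto
    also have "\<dots> = 3 * (x / (real M + 1)) * (ln (real M + 1) + 2)"
      unfolding hh_def by simp
    also have "\<dots> \<le> 3 * s * (ln x + 2)"
    proof -
      have "x \<le> s * (real M + 1)" using ss Mgt s17
        by (metis less_eq_real_def mult_left_mono order_trans zero_le_numeral divide_nonneg_nonneg)
      hence a: "x / (real M + 1) \<le> s" by (simp add: divide_le_eq add_pos_nonneg)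
      have b: "ln (real M + 1) + 2 \<le> ln x + 2" using M1x by simp
      have "(x / (real M + 1)) * (ln (real M + 1) + 2) \<le> s * (ln x + 2)"
        by (rule mult_mono[OF a b]) (use s17 in auto)
      thus ?thesis by (simp add: mult.assoc)
    qed
    finally show "x * T \<le> 3 * s * (ln x + 2)" .
  qed

  have "\<bar>(\<Sum>n\<in>{1..N}. ff (nat \<lfloor>x / real n\<rfloor>)) - a3 * x\<bar> \<le> \<bar>R\<bar> + Q + x * T"
    unfolding main using Q_bd T_bd by linarith
  also have "\<dots> \<le> s * L + L * s + 3 * s * (ln x + 2)"
    using R_bd Q_bd T_bd Mle L0 mult_right_mono[OF Mle L0] by linarith
  also have "\<dots> = s * (9 * ln x + 12)" unfolding L_def by (simp add: algebra_simps)
  also have "\<dots> \<le> s * (21 * ln x)" using lnx s17 by (intro mult_left_mono) auto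
  finally show ?thesis unfolding N_def s_def by (simp add: algebra_simps)
qed


theorem theorem1p4:
  shows "summable (\<lambda>n. mangoldt (Suc n ^ 3 + 2) / (real (Suc n) * real (Suc n + 1)) :: real)
     \<and> a3 \<ge> 1.002998
     \<and> (\<forall>\<epsilon>::real. \<epsilon> > 0 \<longrightarrow>
          (\<lambda>x::real. (\<Sum>n\<in>{1..nat \<lfloor>x\<rfloor>}. (mangoldt (nat \<lfloor>x / real n\<rfloor> ^ 3 + 2) :: real)) - a3 * x)
          \<in> O[at_top](\<lambda>x. x powr ((2 + \<epsilon>) / 3) * (ln x) ^ 2))"
proof (intro conjI allI impI)
  show "summable (\<lambda>n. mangoldt (Suc n ^ 3 + 2) / (real (Suc n) * real (Suc n + 1)) :: real)"
    using gg_summable unfolding gg_def[abs_def] .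
  show "a3 \<ge> 1.002998" by (rule a3_ge)
  fix \<epsilon> :: real assume e: "\<epsilon> > 0"
  show "(\<lambda>x::real. (\<Sum>n\<in>{1..nat \<lfloor>x\<rfloor>}. (mangoldt (nat \<lfloor>x / real n\<rfloor> ^ 3 + 2) :: real)) - a3 * x)
          \<in> O[at_top](\<lambda>x. x powr ((2 + \<epsilon>) / 3) * (ln x) ^ 2)"
  proof (rule bigoI[where c = 21])
    show "\<forall>\<^sub>F x in at_top. norm ((\<Sum>n\<in>{1..nat \<lfloor>x\<rfloor>}. (mangoldt (nat \<lfloor>x / real n\<rfloor> ^ 3 + 2) :: real)) - a3 * x)
            \<le> 21 * norm (x powr ((2 + \<epsilon>) / 3) * (ln x) ^ 2)"
      using eventually_ge_at_top[of "3::real"]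
    proof eventually_elim
      case (elim x)
      have x1: "1 \<le> x" using elim by simp
      have lnx: "1 \<le> ln x"
      proof -
        have "ln 3 \<le> ln x" using elim by simp
        thus ?thesis using ln3_ge by linarith
      qed
      have "sqrt x = x powr (1/2)" using x1 by (simp add: powr_half_sqrt)
      also have "\<dots> \<le> x powr ((2 + \<epsilon>) / 3)" using x1 e by (intro powr_mono) auto
      finally have sq: "sqrt x \<le> x powr ((2 + \<epsilon>) / 3)" .
      have l2: "ln x \<le> ln x ^ 2" using lnx by (simp add: power2_eq_square)
      have "sqrt x * ln x \<le> x powr ((2 + \<epsilon>) / 3) * ln x ^ 2"
        by (rule mult_mono[OF sq l2]) (use lnx in auto)
      moreover have "\<bar>(\<Sum>n\<in>{1..nat \<lfloor>x\<rfloor>}. ff (nat \<lfloor>x / real n\<rfloor>)) - a3 * x\<bar> \<le> 21 * sqrt x * ln x"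
        by (rule main_est[OF elim])
      ultimately show ?case by (simp add: ff_def mult.assoc)
    qed
  qed
qed

end
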